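(* Suppose $f$ satisfies (I), $f(\cdot,i,\mathbf q)\in C^1([0,\infty))$ for all $i\in S,\mathbf q\in D_i$, $f_t$ satisfies (I), and condition (R) holds. Let $Q^*\in\mathcal Q$ be such that $\Gamma^{Q^*}_i(Q^*_i)>\Gamma^{Q^*}_i(Q_i)$ for all $i\in S$ and all $Q\in\mathcal Q$ with $Q_i\ne Q^*_i$. Then $Q^*$ is a strong equilibrium.
   Context: Let $S=\{1,\dots,N\}$. For $i\in S$ let $E_i=\{q\in\mathbb R^N: q_j\ge0\text{ for }j\ne i,\ q_i=-\sum_{j\ne i}q_j\}$ and $D_i\subseteq E_i$ given; $\mathcal Q=\{Q\in\mathbb R^{N\times N}: Q_i\in D_i\ \forall i\}$, $Q_i$ the $i$-th row. For $Q\in\mathcal Q$, $X$ is a time-homogeneous continuous-time Markov chain on $S$ with generator $Q$, $\mathbb E_{i,Q}$ the expectation given $X_0=i$. A payoff function $f$ assigns $f(t,i,\mathbf q)\in\mathbb R$ to $t\ge0,i\in S,\mathbf q\in D_i$. Condition (I) for $g$: $\int_0^\infty\sup_{i\in S,\mathbf q\in D_i,\|\mathbf q\|\le c}|g(t,i,\mathbf q)|dt<\infty$ for all $c>0$. Condition (R): there is $r(t,\varepsilon;i,\mathbf q)$, continuous in $\varepsilon$, with $|f(t+\varepsilon,i,\mathbf q)-f(t,i,\mathbf q)-\varepsilon f_t(t,i,\mathbf q)|\le r(t,\varepsilon;i,\mathbf q)$ for all $t\ge0,\varepsilon>0,i,\mathbf q$, $\int_0^\infty r(t,\varepsilon;i,\mathbf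 q)dt<\infty$ for small $\varepsilon>0$, and $\varepsilon\mapsto r(t,\varepsilon;i,\mathbf q)/\varepsilon$ nondecreasing. $F(i,Q)=\mathbb E_{i,Q}[\int_0^\infty f(t,X_t,Q_{X_t})dt]$, $F(Q)=(F(1,Q),\dots,F(N,Q))$. $Q\otimes_\varepsilon Q'$: generator $Q$ on $[0,\varepsilon]$, then $Q'$ on $(\varepsilon,\infty)$; $F(i,Q\otimes_\varepsilon Q')$ its expected payoff from $X_0=i$. $Q^*\in\mathcal Q$ is a strong equilibrium if for every $i\in S$ and $Q\in\mathcal Q$ there is $\varepsilon>0$ with $F(i,Q^* )\ge F(i,Q\otimes_{\varepsilon'}Q^* )$ for all $0<\varepsilon'\le\varepsilon$. $\Gamma^{Q^*}_i(\mathbf q)=f(0,i,\mathbf q)+\mathbf q\cdot F(Q^* )$ for $\mathbf q\in D_i$. *)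

theory Defs
  imports "HOL-Analysis.Analysis"
begin

text \<open>State space S = the finite type 'n. Generators are real matrices indexed by 'n;
  the i-th row of Q is Q $ i.\<close>

definition E_set :: "'n::finite \<Rightarrow> (real^'n) set" where
  "E_set i = {q. (\<forall>j. j \<noteq> i \<longrightarrow> q $ j \<ge> 0) \<and> q $ i = - (\<Sum>j\<in>UNIV - {i}. q $ j)}"

definition gens :: "('n::finite \<Rightarrow> (real^'n) set) \<Rightarrow> (real^'n^'n) set" where
  "gens D = {Q. \<forall>i. Q $ i \<in> D i}"

fun mat_pow :: "real^'n^'n \<Rightarrow> nat \<Rightarrow> real^'n^'n" where
  "mat_pow Q 0 = mat 1"
| "mat_pow Q (Suc k) = Q ** mat_pow Q k"

definition mexp :: "real \<Rightarrow> real^'n^'n \<Rightarrow> real^'n^'n" where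
  "mexp t Q = (\<Sum>k. (t ^ k / fact k) *\<^sub>R mat_pow Q k)"

text \<open>Transition matrix P(0,t) of the chain Q \<otimes>_\<epsilon> Q' (generator Q on [0,\<epsilon>], Q' afterwards),
  and the generator in force at time t.\<close>
definition cat_trans :: "real^'n^'n \<Rightarrow> real \<Rightarrow> real^'n^'n \<Rightarrow> real \<Rightarrow> real^'n^'n" where
  "cat_trans Q \<epsilon> Q' t = (if t \<le> \<epsilon> then mexp t Q else mexp \<epsilon> Q ** mexp (t - \<epsilon>) Q')"

definition cat_gen :: "real^'n^'n \<Rightarrow> real \<Rightarrow> real^'n^'n \<Rightarrow> real \<Rightarrow> real^'n^'n" where
  "cat_gen Q \<epsilon> Q' t = (if t \<le> \<epsilon> then Q else Q')"

text \<open>Expected payoff E_{i,Q}[\<integral>_0^\<infinity> f(t,X_t,Q_{X_t}) dt], written via the marginal law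
  P(X_t = j | X_0 = i) = exp(tQ)_{ij}.\<close>
definition payoff :: "(real \<Rightarrow> 'n::finite \<Rightarrow> real^'n \<Rightarrow> real) \<Rightarrow> 'n \<Rightarrow> real^'n^'n \<Rightarrow> real" where
  "payoff f i Q = (LBINT t:{0..}. (\<Sum>j\<in>UNIV. mexp t Q $ i $ j * f t j (Q $ j)))"

definition payoff_vec :: "(real \<Rightarrow> 'n::finite \<Rightarrow> real^'n \<Rightarrow> real) \<Rightarrow> real^'n^'n \<Rightarrow> real^'n" where
  "payoff_vec f Q = (\<chi> j. payoff f j Q)"

definition payoff_cat :: "(real \<Rightarrow> 'n::finite \<Rightarrow> real^'n \<Rightarrow> real) \<Rightarrow> 'n \<Rightarrow> real^'n^'n \<Rightarrow> real \<Rightarrow> real^'n^'n \<Rightarrow> real" where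
  "payoff_cat f i Q \<epsilon> Q' = (LBINT t:{0..}.
      (\<Sum>j\<in>UNIV. cat_trans Q \<epsilon> Q' t $ i $ j * f t j (cat_gen Q \<epsilon> Q' t $ j)))"

definition cond_I :: "('n::finite \<Rightarrow> (real^'n) set) \<Rightarrow> (real \<Rightarrow> 'n \<Rightarrow> real^'n \<Rightarrow> real) \<Rightarrow> bool" where
  "cond_I D g \<longleftrightarrow> (\<forall>c>0. (\<integral>\<^sup>+ t. indicator {0..} t *
      (SUP p\<in>{(i, q). q \<in> D i \<and> norm q \<le> c}. ennreal \<bar>g t (fst p) (snd p)\<bar>) \<partial>lborel) < \<infinity>)"

definition cond_R :: "('n::finite \<Rightarrow> (real^'n) set) \<Rightarrow> (real \<Rightarrow> 'n \<Rightarrow> real^'n \<Rightarrow> real)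
    \<Rightarrow> (real \<Rightarrow> 'n \<Rightarrow> real^'n \<Rightarrow> real) \<Rightarrow> bool" where
  "cond_R D f ft \<longleftrightarrow> (\<exists>r :: real \<Rightarrow> real \<Rightarrow> 'n \<Rightarrow> real^'n \<Rightarrow> real.
      (\<forall>t i q. q \<in> D i \<longrightarrow> continuous_on {0<..} (\<lambda>\<epsilon>. r t \<epsilon> i q)) \<and>
      (\<forall>t \<epsilon> i q. t \<ge> 0 \<longrightarrow> \<epsilon> > 0 \<longrightarrow> q \<in> D i \<longrightarrow>
         \<bar>f (t + \<epsilon>) i q - f t i q - \<epsilon> * ft t i q\<bar> \<le> r t \<epsilon> i q) \<and>
      (\<forall>i q. q \<in> D i \<longrightarrow> (\<exists>\<epsilon>0>0. \<forall>\<epsilon>. 0 < \<epsilon> \<and> \<epsilon> \<le> \<epsilon>0 \<longrightarrow>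
         (\<integral>\<^sup>+ t. indicator {0..} t * ennreal (r t \<epsilon> i q) \<partial>lborel) < \<infinity>)) \<and>
      (\<forall>t i q. q \<in> D i \<longrightarrow> mono_on {0<..} (\<lambda>\<epsilon>. r t \<epsilon> i q / \<epsilon>)))"

definition Gamma :: "(real \<Rightarrow> 'n::finite \<Rightarrow> real^'n \<Rightarrow> real) \<Rightarrow> real^'n^'n \<Rightarrow> 'n \<Rightarrow> real^'n \<Rightarrow> real" where
  "Gamma f Qs i q = f 0 i q + q \<bullet> payoff_vec f Qs"

definition strong_equilibrium :: "('n::finite \<Rightarrow> (real^'n) set) \<Rightarrow> (real \<Rightarrow> 'n \<Rightarrow> real^'n \<Rightarrow> real)
    \<Rightarrow> real^'n^'n \<Rightarrow> bool" where
  "strong_equilibrium D f Qs \<longleftrightarrow> Qs \<in> gens D \<and>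
     (\<forall>i. \<forall>Q\<in>gens D. \<exists>\<epsilon>>0. \<forall>\<epsilon>'. 0 < \<epsilon>' \<and> \<epsilon>' \<le> \<epsilon> \<longrightarrow> payoff f i Qs \<ge> payoff_cat f i Q \<epsilon>' Qs)"

end

theory Submission
  imports Defs
begin


definition l1c :: "real^'n^'n \<Rightarrow> real" where
  "l1c A = (\<Sum>a\<in>UNIV. \<Sum>b\<in>UNIV. \<bar>A$a$b\<bar>)"

lemma l1c_nonneg: "0 \<le> l1c A"
  unfolding l1c_def by (intro sum_nonneg) auto

lemma row_le_l1c: "(\<Sum>l\<in>UNIV. \<bar>A$i$l\<bar>) \<le> l1c (A::real^'n::finite^'n)"
  unfolding l1c_def
  by (rule member_le_sum[of i UNIV "\<lambda>a. \<Sum>b\<in>UNIV. \<bar>A$a$b\<bar>"]) (auto intro: sum_nonneg)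

lemma mat_pow_bound: "\<bar>mat_pow A k $ i $ j\<bar> \<le> l1c (A::real^'n::finite^'n) ^ k"
proof (induction k arbitrary: i j)
  case 0
  then show ?case by (simp add: mat_def)
next
  case (Suc k)
  have "\<bar>mat_pow A (Suc k) $ i $ j\<bar> = \<bar>\<Sum>l\<in>UNIV. A$i$l * mat_pow A k $ l $ j\<bar>"
    by (simp add: matrix_matrix_mult_def)
  also have "\<dots> \<le> (\<Sum>l\<in>UNIV. \<bar>A$i$l\<bar> * l1c A ^ k)"
    by (rule order_trans[OF sum_abs]) (auto intro!: sum_mono mult_left_mono Suc simp: abs_mult)
  also have "\<dots> = (\<Sum>l\<in>UNIV. \<bar>A$i$l\<bar>) * l1c A ^ k"
    by (simp add: sum_distrib_right)
  also have "\<dots> \<le> l1c A * l1c A ^ k"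
    by (rule mult_right_mono[OF row_le_l1c]) (simp add: l1c_nonneg)
  finally show ?case by simp
qed

lemma norm_mat_le: "norm (X::real^'n::finite^'m::finite) \<le> (\<Sum>a\<in>UNIV. \<Sum>b\<in>UNIV. \<bar>X$a$b\<bar>)"
proof -
  have "norm X \<le> (\<Sum>a\<in>UNIV. norm (X$a))"
    unfolding norm_vec_def by (rule L2_set_le_sum) auto
  also have "\<dots> \<le> (\<Sum>a\<in>UNIV. \<Sum>b\<in>UNIV. \<bar>X$a$b\<bar>)"
    by (intro sum_mono norm_le_l1_cart)
  finally show ?thesis .
qed

lemma mexp_summable: "summable (\<lambda>k. (t ^ k / fact k) *\<^sub>R mat_pow (A::real^'n::finite^'n) k)"
proof (rule summable_comparison_test')
  let ?N = "real (CARD('n)) * real (CARD('n))"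
  show "summable (\<lambda>k. ?N * (inverse (fact k) * (\<bar>t\<bar> * l1c A) ^ k))"
    by (intro summable_mult summable_exp)
  fix k :: nat
  have "norm ((t ^ k / fact k) *\<^sub>R mat_pow A k) \<le>
     (\<Sum>a\<in>UNIV. \<Sum>b\<in>UNIV. \<bar>((t ^ k / fact k) *\<^sub>R mat_pow A k)$a$b\<bar>)" by (rule norm_mat_le)
  also have "\<dots> \<le> (\<Sum>a\<in>(UNIV::'n set). \<Sum>b\<in>(UNIV::'n set). inverse (fact k) * (\<bar>t\<bar> * l1c A) ^ k)"
  proof (intro sum_mono)
    fix a b
    have "\<bar>((t ^ k / fact k) *\<^sub>R mat_pow A k)$a$b\<bar> = \<bar>t\<bar>^k / fact k * \<bar>mat_pow A k $ a $ b\<bar>"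
      by (simp add: abs_mult power_abs)
    also have "\<dots> \<le> \<bar>t\<bar>^k / fact k * l1c A ^ k"
      by (intro mult_left_mono mat_pow_bound) auto
    finally show "\<bar>((t ^ k / fact k) *\<^sub>R mat_pow A k)$a$b\<bar> \<le> inverse (fact k) * (\<bar>t\<bar> * l1c A) ^ k"
      by (simp add: power_mult_distrib divide_inverse mult_ac)
  qed
  also have "\<dots> = ?N * (inverse (fact k) * (\<bar>t\<bar> * l1c A) ^ k)"
    by simp
  finally show "norm ((t ^ k / fact k) *\<^sub>R mat_pow A k) \<le> ?N * (inverse (fact k) * (\<bar>t\<bar> * l1c A) ^ k)" .
qed

lemma bl_entry: "bounded_linear (\<lambda>X::real^'n::finite^'m::finite. X $ i $ j)"
  using bounded_linear_compose[OF bounded_linear_vec_nth[of j] bounded_linear_vec_nth[of i]] by simp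

lemma mexp_entry: "mexp t (A::real^'n::finite^'n) $ i $ j = (\<Sum>k. (mat_pow A k $ i $ j / fact k) * t ^ k)"
proof -
  have "mexp t A $ i $ j = (\<Sum>k. ((t ^ k / fact k) *\<^sub>R mat_pow A k) $ i $ j)"
    unfolding mexp_def using bounded_linear.suminf[OF bl_entry mexp_summable] by blast
  then show ?thesis by (simp add: mult_ac)
qed

lemma mat_pow_comm: "mat_pow A k ** A = A ** mat_pow A k"
proof (induction k)
  case (Suc k)
  have "mat_pow A (Suc k) ** A = A ** (mat_pow A k ** A)" by (simp add: matrix_mul_assoc)
  also have "\<dots> = A ** mat_pow A (Suc k)" by (simp add: Suc)
  finally show ?case .
qed simp

lemma bl_mul_left: "bounded_linear (\<lambda>X::real^'n::finite^'n. A ** X)"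
  by (rule linear_conv_bounded_linear[THEN iffD1])
    (auto intro!: linearI simp: matrix_add_ldistrib vec_eq_iff matrix_matrix_mult_def sum_distrib_left mult_ac distrib_left sum.distrib)

lemma bl_mul_right: "bounded_linear (\<lambda>X::real^'n::finite^'n. X ** A)"
  by (rule linear_conv_bounded_linear[THEN iffD1])
    (auto intro!: linearI simp: vec_eq_iff matrix_matrix_mult_def sum_distrib_left mult_ac distrib_left distrib_right sum.distrib)

lemma mexp_left: "A ** mexp t A = (\<Sum>k. (t ^ k / fact k) *\<^sub>R mat_pow A (Suc k))"
proof -
  have "A ** mexp t A = (\<Sum>k. A ** ((t ^ k / fact k) *\<^sub>R mat_pow A k))"
    unfolding mexp_def by (rule bounded_linear.suminf[OF bl_mul_left mexp_summable])
  also have "(\<lambda>k. A ** ((t ^ k / fact k) *\<^sub>R mat_pow A k)) = (\<lambda>k. (t ^ k / fact k) *\<^sub>R mat_pow A (Suc k))"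
    by (rule ext) (simp add: vec_eq_iff matrix_matrix_mult_def sum_distrib_left mult_ac)
  finally show ?thesis .
qed

lemma mexp_right: "mexp t A ** A = (\<Sum>k. (t ^ k / fact k) *\<^sub>R mat_pow A (Suc k))"
proof -
  have "mexp t A ** A = (\<Sum>k. ((t ^ k / fact k) *\<^sub>R mat_pow A k) ** A)"
    unfolding mexp_def by (rule bounded_linear.suminf[OF bl_mul_right mexp_summable])
  also have "(\<lambda>k. ((t ^ k / fact k) *\<^sub>R mat_pow A k) ** A) = (\<lambda>k. (t ^ k / fact k) *\<^sub>R mat_pow A (Suc k))"
  proof (rule ext)
    fix k
    have "((t ^ k / fact k) *\<^sub>R mat_pow A k) ** A = (t ^ k / fact k) *\<^sub>R (mat_pow A k ** A)"
      by (simp add: vec_eq_iff matrix_matrix_mult_def sum_distrib_left mult_ac)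
    then show "((t ^ k / fact k) *\<^sub>R mat_pow A k) ** A = (t ^ k / fact k) *\<^sub>R mat_pow A (Suc k)"
      by (simp add: mat_pow_comm)
  qed
  finally show ?thesis .
qed

lemma mexp_comm: "mexp t A ** A = A ** mexp t A"
  by (simp add: mexp_left mexp_right)

lemma summable_Suc_series: "summable (\<lambda>k. (t ^ k / fact k) *\<^sub>R mat_pow (A::real^'n::finite^'n) (Suc k))"
proof -
  have "summable (\<lambda>k. A ** ((t ^ k / fact k) *\<^sub>R mat_pow A k))"
    by (rule bounded_linear.summable[OF bl_mul_left mexp_summable])
  also have "(\<lambda>k. A ** ((t ^ k / fact k) *\<^sub>R mat_pow A k)) = (\<lambda>k. (t ^ k / fact k) *\<^sub>R mat_pow A (Suc k))"
    by (rule ext) (simp add: vec_eq_iff matrix_matrix_mult_def sum_distrib_left mult_ac)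
  finally show ?thesis .
qed

lemma mexp_left_entry: "(A ** mexp t A) $ i $ j = (\<Sum>k. (mat_pow A (Suc k) $ i $ j / fact k) * t ^ k)"
proof -
  have "(A ** mexp t A) $ i $ j = (\<Sum>k. ((t ^ k / fact k) *\<^sub>R mat_pow A (Suc k)) $ i $ j)"
    unfolding mexp_left using bounded_linear.suminf[OF bl_entry summable_Suc_series] by blast
  then show ?thesis by (simp add: mult_ac)
qed

lemma mexp_deriv:
  "((\<lambda>t. mexp t (A::real^'n::finite^'n) $ i $ j) has_real_derivative (A ** mexp t A) $ i $ j) (at t within T)"
proof -
  define c where "c k = mat_pow A k $ i $ j / fact k" for k
  have sm: "summable (\<lambda>n. c n * y ^ n)" for y
  proof -
    have "summable (\<lambda>k. ((y ^ k / fact k) *\<^sub>R mat_pow A k) $ i $ j)"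
      by (rule bounded_linear.summable[OF bl_entry mexp_summable])
    then show ?thesis by (simp add: c_def mult_ac)
  qed
  have "((\<lambda>t. \<Sum>n. c n * t ^ n) has_real_derivative (\<Sum>n. diffs c n * t ^ n)) (at t)"
    by (rule termdiffs_strong_converges_everywhere[OF sm])
  moreover have "(\<lambda>t. \<Sum>n. c n * t ^ n) = (\<lambda>t. mexp t A $ i $ j)"
    by (rule ext) (simp add: mexp_entry c_def)
  moreover have "(\<Sum>n. diffs c n * t ^ n) = (A ** mexp t A) $ i $ j"
    by (simp add: mexp_left_entry diffs_def c_def)
  ultimately show ?thesis using has_field_derivative_at_within by metis
qed

lemma mexp_zero: "mexp 0 A = mat 1"
proof -
  have "(\<lambda>k. ((0::real) ^ k / fact k) *\<^sub>R mat_pow A k) = (\<lambda>k. if k = 0 then mat 1 else 0)"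
    by (rule ext) auto
  then have "(\<lambda>k. ((0::real) ^ k / fact k) *\<^sub>R mat_pow A k) sums mat 1"
    using sums_single[of 0 "\<lambda>_. mat 1"] by simp
  then show ?thesis unfolding mexp_def by (simp add: sums_iff)
qed

lemma mmult_deriv:
  fixes F G :: "real \<Rightarrow> real^'n::finite^'n"
  assumes "\<And>a b. ((\<lambda>t. F t $ a $ b) has_real_derivative F' $ a $ b) (at t within T)"
    and "\<And>a b. ((\<lambda>t. G t $ a $ b) has_real_derivative G' $ a $ b) (at t within T)"
  shows "((\<lambda>t. (F t ** G t) $ i $ j) has_real_derivative (F' ** G t + F t ** G') $ i $ j) (at t within T)"
proof -
  have "((\<lambda>t. \<Sum>k\<in>UNIV. F t $ i $ k * G t $ k $ j) has_real_derivative
      (\<Sum>k\<in>UNIV. F' $ i $ k * G t $ k $ j + F t $ i $ k * G' $ k $ j)) (at t within T)"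
    by (intro DERIV_sum) (rule DERIV_mult'[OF assms(1) assms(2), THEN DERIV_cong], simp)
  then show ?thesis by (simp add: matrix_matrix_mult_def sum.distrib)
qed

lemma mvmult_deriv:
  fixes F :: "real \<Rightarrow> real^'n::finite^'n" and v :: "real \<Rightarrow> real^'n"
  assumes "\<And>a b. ((\<lambda>t. F t $ a $ b) has_real_derivative F' $ a $ b) (at t within T)"
    and "\<And>b. ((\<lambda>t. v t $ b) has_real_derivative v' $ b) (at t within T)"
  shows "((\<lambda>t. (F t *v v t) $ i) has_real_derivative (F' *v v t + F t *v v') $ i) (at t within T)"
proof -
  have "((\<lambda>t. \<Sum>k\<in>UNIV. F t $ i $ k * v t $ k) has_real_derivative
      (\<Sum>k\<in>UNIV. F' $ i $ k * v t $ k + F t $ i $ k * v' $ k)) (at t within T)"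
    by (intro DERIV_sum) (rule DERIV_mult'[OF assms(1) assms(2), THEN DERIV_cong], simp)
  then show ?thesis by (simp add: matrix_vector_mult_def sum.distrib)
qed

lemma mexp_deriv_rev:
  "((\<lambda>t. mexp (c - t) (A::real^'n::finite^'n) $ i $ j) has_real_derivative (- (A ** mexp (c - t) A)) $ i $ j) (at t within T)"
proof -
  have "((\<lambda>t. mexp (c - t) A $ i $ j) has_real_derivative (A ** mexp (c - t) A) $ i $ j * (-1)) (at t)"
    by (rule DERIV_chain2[of "\<lambda>s. mexp s A $ i $ j", OF mexp_deriv]) (auto intro!: derivative_eq_intros)
  then show ?thesis by (simp add: has_field_derivative_at_within)
qed

lemma mexp_add: "mexp (s + t) A = mexp s A ** mexp (t::real) (A::real^'n::finite^'n)"
proof -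
  let ?a = "s + t"
  have "(mexp (?a - x) A ** mexp x A) $ i $ j = (mexp (?a - 0) A ** mexp 0 A) $ i $ j" for x i j
  proof -
    have "\<forall>x. ((\<lambda>x. (mexp (?a - x) A ** mexp x A) $ i $ j) has_real_derivative 0) (at x)"
    proof
    fix x
    have "((\<lambda>x. (mexp (?a - x) A ** mexp x A) $ i $ j) has_real_derivative
       ((- (A ** mexp (?a - x) A)) ** mexp x A + mexp (?a - x) A ** (A ** mexp x A)) $ i $ j) (at x)"
      by (intro mmult_deriv mexp_deriv_rev mexp_deriv)
    moreover have "(- (A ** mexp (?a - x) A)) ** mexp x A + mexp (?a - x) A ** (A ** mexp x A) = 0"
    proof -
      have "(- (A ** mexp (?a - x) A)) ** mexp x A = - ((A ** mexp (?a - x) A) ** mexp x A)"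
        by (simp add: vec_eq_iff matrix_matrix_mult_def sum_negf)
      also have "\<dots> = - ((mexp (?a - x) A ** A) ** mexp x A)" by (simp add: mexp_comm)
      finally have "(- (A ** mexp (?a - x) A)) ** mexp x A = - ((mexp (?a - x) A ** A) ** mexp x A)" .
      then show ?thesis by (simp add: matrix_mul_assoc)
    qed
    ultimately show "((\<lambda>x. (mexp (?a - x) A ** mexp x A) $ i $ j) has_real_derivative 0) (at x)"
      by simp
  qed
  then show ?thesis by (rule DERIV_isconst_all)
  qed
  from this[of t] have "(mexp s A ** mexp t A) $ i $ j = mexp ?a A $ i $ j" for i j
    by (simp add: mexp_zero)
  then show ?thesis by (simp add: vec_eq_iff)
qed

lemma mexp_inv: "mexp (- t) A ** mexp t A = mat 1"
  using mexp_add[of "-t" t A] by (simp add: mexp_zero)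

lemma mexp_inv2: "mexp t A ** mexp (- t) A = mat 1"
  using mexp_add[of t "-t" A] by (simp add: mexp_zero)

lemma matrix_add_rdistrib': "((B::real^'n::finite^'n) + C) ** A = B ** A + C ** A"
  by (simp add: vec_eq_iff matrix_matrix_mult_def distrib_right sum.distrib)

lemma matrix_neg_right: "(X::real^'n::finite^'n) ** (- Y) = - (X ** Y)"
  by (simp add: vec_eq_iff matrix_matrix_mult_def sum_negf)

lemma mexp_shift:
  "mexp x (A + c *\<^sub>R mat 1) = exp (c * x) *\<^sub>R mexp x (A::real^'n::finite^'n)"
proof -
  let ?B = "A + c *\<^sub>R mat 1"
  have key: "(exp (- c * y) *\<^sub>R (mexp y ?B ** mexp (- y) A)) $ i $ j = (exp (- c * 0) *\<^sub>R (mexp 0 ?B ** mexp (- 0) A)) $ i $ j" for y i j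
  proof -
    have "\<forall>y. ((\<lambda>y. (exp (- c * y) *\<^sub>R (mexp y ?B ** mexp (- y) A)) $ i $ j) has_real_derivative 0) (at y)"
    proof
      fix y
      have d1: "((\<lambda>y. (mexp y ?B ** mexp (0 - y) A) $ i $ j) has_real_derivative
         (?B ** mexp y ?B ** mexp (0 - y) A + mexp y ?B ** (- (A ** mexp (0 - y) A))) $ i $ j) (at y)"
        by (intro mmult_deriv mexp_deriv_rev mexp_deriv)
      have e: "?B ** mexp y ?B ** mexp (0 - y) A + mexp y ?B ** (- (A ** mexp (0 - y) A))
          = c *\<^sub>R (mexp y ?B ** mexp (- y) A)"
      proof -
        have "?B ** mexp y ?B = mexp y ?B ** ?B" by (simp add: mexp_comm)
        moreover have "mexp y ?B ** ?B = mexp y ?B ** A + c *\<^sub>R mexp y ?B"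
          by (simp add: matrix_add_ldistrib matrix_scalar_ac)
        ultimately have "?B ** mexp y ?B ** mexp (0 - y) A = mexp y ?B ** A ** mexp (- y) A + c *\<^sub>R (mexp y ?B ** mexp (- y) A)"
          by (simp add: matrix_add_rdistrib' scalar_matrix_assoc)
        moreover have "mexp y ?B ** (- (A ** mexp (0 - y) A)) = - (mexp y ?B ** A ** mexp (- y) A)"
          by (simp add: matrix_neg_right matrix_mul_assoc)
        ultimately show ?thesis by simp
      qed
      have "((\<lambda>y. exp (- c * y) * (mexp y ?B ** mexp (0 - y) A) $ i $ j) has_real_derivative
         exp (- c * y) * (c *\<^sub>R (mexp y ?B ** mexp (- y) A)) $ i $ j + (- c * exp (- c * y)) * (mexp y ?B ** mexp (0 - y) A) $ i $ j) (at y)"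
        using d1 unfolding e by (intro DERIV_mult' derivative_eq_intros) auto
      then show "((\<lambda>y. (exp (- c * y) *\<^sub>R (mexp y ?B ** mexp (- y) A)) $ i $ j) has_real_derivative 0) (at y)"
        by simp
    qed
    then show ?thesis by (rule DERIV_isconst_all)
  qed
  then have "exp (- c * x) *\<^sub>R (mexp x ?B ** mexp (- x) A) = mat 1"
    by (simp add: vec_eq_iff mexp_zero)
  then have "exp (- c * x) *\<^sub>R (mexp x ?B ** mexp (- x) A) ** mexp x A = mexp x A"
    by simp
  moreover have "exp (- c * x) *\<^sub>R (mexp x ?B ** mexp (- x) A) ** mexp x A = exp (- c * x) *\<^sub>R mexp x ?B"
  proof -
    have "exp (- c * x) *\<^sub>R (mexp x ?B ** mexp (- x) A) ** mexp x A = exp (- c * x) *\<^sub>R (mexp x ?B ** mexp (- x) A ** mexp x A)"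
      by (simp add: vec_eq_iff matrix_matrix_mult_def sum_distrib_left mult_ac)
    also have "\<dots> = exp (- c * x) *\<^sub>R mexp x ?B"
      by (simp add: matrix_mul_assoc[symmetric] mexp_inv)
    finally show ?thesis .
  qed
  ultimately have "exp (- c * x) *\<^sub>R mexp x ?B = mexp x A" by simp
  then have "exp (c * x) *\<^sub>R (exp (- c * x) *\<^sub>R mexp x ?B) = exp (c * x) *\<^sub>R mexp x A" by simp
  then show ?thesis by (simp add: exp_minus_inverse[symmetric] exp_add[symmetric])
qed

lemma mat_pow_nonneg: "(\<And>a b. 0 \<le> B $ a $ b) \<Longrightarrow> 0 \<le> mat_pow (B::real^'n::finite^'n) k $ i $ j"
  by (induction k arbitrary: i j) (auto simp: mat_def matrix_matrix_mult_def intro!: sum_nonneg)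

lemma mexp_nonneg_pos: "(\<And>a b. 0 \<le> B $ a $ b) \<Longrightarrow> 0 \<le> t \<Longrightarrow> 0 \<le> mexp t (B::real^'n::finite^'n) $ i $ j"
proof -
  assume B: "\<And>a b. 0 \<le> B $ a $ b" and t: "0 \<le> t"
  have sm: "summable (\<lambda>k. (mat_pow B k $ i $ j / fact k) * t ^ k)"
  proof -
    have "summable (\<lambda>k. ((t ^ k / fact k) *\<^sub>R mat_pow B k) $ i $ j)"
      by (rule bounded_linear.summable[OF bl_entry mexp_summable])
    then show ?thesis by (simp add: mult_ac)
  qed
  show ?thesis unfolding mexp_entry
    by (rule suminf_nonneg[OF sm]) (auto intro!: mult_nonneg_nonneg divide_nonneg_nonneg mat_pow_nonneg B t zero_le_power)
qed

lemma mexp_nonneg: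
  assumes "\<And>a b. a \<noteq> b \<Longrightarrow> 0 \<le> A $ a $ b" and "0 \<le> t"
  shows "0 \<le> mexp t (A::real^'n::finite^'n) $ i $ j"
proof -
  let ?c = "l1c A"
  let ?B = "A + ?c *\<^sub>R mat 1"
  have B: "0 \<le> ?B $ a $ b" for a b
  proof (cases "a = b")
    case True
    have "\<bar>A$a$a\<bar> \<le> (\<Sum>l\<in>UNIV. \<bar>A$a$l\<bar>)"
      by (rule member_le_sum) auto
    also have "\<dots> \<le> ?c" by (rule row_le_l1c)
    finally show ?thesis using True by (simp add: mat_def)
  next
    case False then show ?thesis using assms(1) by (simp add: mat_def)
  qed
  have "mexp t ?B $ i $ j = exp (?c * t) * mexp t A $ i $ j" by (simp add: mexp_shift)
  moreover have "0 \<le> mexp t ?B $ i $ j" by (rule mexp_nonneg_pos[OF B assms(2)])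
  ultimately show ?thesis by (simp add: zero_le_mult_iff)
qed

lemma mexp_rowsum:
  assumes "\<And>a. (\<Sum>b\<in>UNIV. A $ a $ b) = 0"
  shows "(\<Sum>j\<in>UNIV. mexp t (A::real^'n::finite^'n) $ i $ j) = 1"
proof -
  have "\<forall>t. ((\<lambda>t. \<Sum>j\<in>UNIV. mexp t A $ i $ j) has_real_derivative 0) (at t)"
  proof
    fix t
    have "((\<lambda>t. \<Sum>j\<in>UNIV. mexp t A $ i $ j) has_real_derivative (\<Sum>j\<in>UNIV. (mexp t A ** A) $ i $ j)) (at t)"
      unfolding mexp_comm by (intro DERIV_sum mexp_deriv)
    moreover have "(\<Sum>j\<in>UNIV. (mexp t A ** A) $ i $ j) = 0"
      by (simp add: matrix_matrix_mult_def sum.swap[of _ UNIV UNIV] sum_distrib_left[symmetric] assms)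
    ultimately show "((\<lambda>t. \<Sum>j\<in>UNIV. mexp t A $ i $ j) has_real_derivative 0) (at t)" by simp
  qed
  then have "(\<Sum>j\<in>UNIV. mexp t A $ i $ j) = (\<Sum>j\<in>UNIV. mexp 0 A $ i $ j)"
    by (rule DERIV_isconst_all)
  also have "\<dots> = 1" by (simp add: mexp_zero mat_def)
  finally show ?thesis .
qed



lemma mexp_cont: "continuous_on S (\<lambda>t. mexp t (A::real^'n::finite^'n) $ i $ j)"
  by (rule continuous_at_imp_continuous_on) (auto intro: DERIV_isCont[OF mexp_deriv])

lemma mexp_neg_deriv:
  "((\<lambda>t. mexp (- t) (A::real^'n::finite^'n) $ i $ j) has_real_derivative (- (A ** mexp (- t) A)) $ i $ j) (at t within T)"
  using mexp_deriv_rev[of 0 A i j t T] by simp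

lemma mexp_neg_cont: "continuous_on S (\<lambda>t. mexp (- t) (A::real^'n::finite^'n) $ i $ j)"
  by (rule continuous_at_imp_continuous_on) (auto intro: DERIV_isCont[OF mexp_neg_deriv])

lemma E_rowsum: "q \<in> E_set i \<Longrightarrow> (\<Sum>b\<in>UNIV. q $ b) = 0"
  unfolding E_set_def by (simp add: sum.remove[of UNIV i])

lemma E_offdiag: "q \<in> E_set i \<Longrightarrow> j \<noteq> i \<Longrightarrow> 0 \<le> q $ j"
  unfolding E_set_def by auto

lemma stoch:
  assumes "\<And>a. Q $ a \<in> E_set a" and "0 \<le> t"
  shows "0 \<le> mexp t (Q::real^'n::finite^'n) $ a $ b" "mexp t Q $ a $ b \<le> 1"
proof -
  show nn: "0 \<le> mexp t Q $ a $ b" for a b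
    by (rule mexp_nonneg[OF _ assms(2)]) (metis E_offdiag assms(1))
  have "mexp t Q $ a $ b \<le> (\<Sum>j\<in>UNIV. mexp t Q $ a $ j)"
    by (rule member_le_sum) (auto intro: nn)
  also have "\<dots> = 1" by (rule mexp_rowsum) (metis E_rowsum assms(1))
  finally show "mexp t Q $ a $ b \<le> 1" .
qed

lemma f_int:
  assumes I: "cond_I D f" and cont: "continuous_on {0..} (\<lambda>t. f t j q)" and q: "q \<in> D j"
  shows "set_integrable lborel {0::real..} (\<lambda>t. f t j q)"
  unfolding set_integrable_def
proof (rule integrableI_bounded)
  show "(\<lambda>t. indicator {0::real..} t *\<^sub>R f t j q) \<in> borel_measurable lborel"
    using borel_measurable_continuous_on_indicator[OF _ cont] by simp
  define c where "c = norm q + 1"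
  have c: "c > 0" by (simp add: c_def add_nonneg_pos)
  let ?S = "{(i, q). q \<in> D i \<and> norm q \<le> c}"
  have "(\<integral>\<^sup>+ t. ennreal (norm (indicator {0::real..} t *\<^sub>R f t j q)) \<partial>lborel)
      \<le> (\<integral>\<^sup>+ t. indicator {0..} t * (SUP p\<in>?S. ennreal \<bar>f t (fst p) (snd p)\<bar>) \<partial>lborel)"
  proof (rule nn_integral_mono)
    fix t :: real
    have "(j, q) \<in> ?S" using q by (simp add: c_def)
    then have "ennreal \<bar>f t j q\<bar> \<le> (SUP p\<in>?S. ennreal \<bar>f t (fst p) (snd p)\<bar>)"
      by (rule SUP_upper2) simp
    then show "ennreal (norm (indicator {0::real..} t *\<^sub>R f t j q)) \<le> indicator {0..} t * (SUP p\<in>?S. ennreal \<bar>f t (fst p) (snd p)\<bar>)"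
      by (cases "t \<ge> 0") auto
  qed
  also have "\<dots> < \<infinity>" using I c unfolding cond_I_def by blast
  finally show "(\<integral>\<^sup>+ t. ennreal (norm (indicator {0::real..} t *\<^sub>R f t j q)) \<partial>lborel) < \<infinity>" .
qed

lemma int_bounded_mult:
  fixes h w :: "real \<Rightarrow> real"
  assumes h: "set_integrable lborel A h" and w: "continuous_on UNIV w" and b: "\<And>t. t \<in> A \<Longrightarrow> \<bar>w t\<bar> \<le> 1"
  shows "set_integrable lborel A (\<lambda>t. w t * h t)"
  unfolding set_integrable_def
proof (rule Bochner_Integration.integrable_bound[where f="\<lambda>t. indicator A t *\<^sub>R h t"])
  show "integrable lborel (\<lambda>t. indicator A t *\<^sub>R h t)" using h unfolding set_integrable_def .
  have m1: "(\<lambda>t. indicator A t *\<^sub>R h t) \<in> borel_measurable lborel"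
    using h unfolding set_integrable_def by (rule borel_measurable_integrable)
  have m2: "w \<in> borel_measurable lborel" using borel_measurable_continuous_onI[OF w] by simp
  have "(\<lambda>t. w t * (indicator A t *\<^sub>R h t)) \<in> borel_measurable lborel"
    using m1 m2 by measurable
  moreover have "(\<lambda>t. w t * (indicator A t *\<^sub>R h t)) = (\<lambda>t. indicator A t *\<^sub>R (w t * h t))"
    by (auto simp: indicator_def)
  ultimately show "(\<lambda>t. indicator A t *\<^sub>R (w t * h t)) \<in> borel_measurable lborel" by simp
  show "AE x in lborel. norm (indicator A x *\<^sub>R (w x * h x)) \<le> norm (indicator A x *\<^sub>R h x)"
  proof (rule AE_I2)
    fix x
    show "norm (indicator A x *\<^sub>R (w x * h x)) \<le> norm (indicator A x *\<^sub>R h x)"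
    proof (cases "x \<in> A")
      case True
      then have "\<bar>w x\<bar> * \<bar>h x\<bar> \<le> 1 * \<bar>h x\<bar>" by (intro mult_right_mono b) auto
      then show ?thesis using True by (simp add: abs_mult)
    qed simp
  qed
qed

lemma set_integral_sum':
  fixes f :: "'i \<Rightarrow> real \<Rightarrow> real"
  assumes "finite I" "\<And>m. m \<in> I \<Longrightarrow> set_integrable lborel A (f m)"
  shows "set_integrable lborel A (\<lambda>t. \<Sum>m\<in>I. f m t)"
    "(LINT t:A|lborel. (\<Sum>m\<in>I. f m t)) = (\<Sum>m\<in>I. LINT t:A|lborel. f m t)"
proof -
  have e: "(\<lambda>t. indicator A t *\<^sub>R (\<Sum>m\<in>I. f m t)) = (\<lambda>t. \<Sum>m\<in>I. indicator A t *\<^sub>R f m t)"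
    by (simp add: sum_distrib_left)
  show "set_integrable lborel A (\<lambda>t. \<Sum>m\<in>I. f m t)"
    unfolding set_integrable_def e using assms unfolding set_integrable_def by (intro Bochner_Integration.integrable_sum) auto
  show "(LINT t:A|lborel. (\<Sum>m\<in>I. f m t)) = (\<Sum>m\<in>I. LINT t:A|lborel. f m t)"
    unfolding set_lebesgue_integral_def e using assms unfolding set_integrable_def
    by (intro Bochner_Integration.integral_sum) auto
qed

lemma set_integrable_cong':
  assumes "set_integrable M A f" "\<And>x. x \<in> A \<Longrightarrow> f x = g x"
  shows "set_integrable M A g"
proof -
  have "(\<lambda>x. indicator A x *\<^sub>R f x) = (\<lambda>x. indicator A x *\<^sub>R g x)"
  proof
    fix x show "indicator A x *\<^sub>R f x = indicator A x *\<^sub>R g x"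
      using assms(2)[of x] by (cases "x \<in> A") auto
  qed
  then show ?thesis using assms(1) unfolding set_integrable_def by simp
qed

lemma cont_mv:
  fixes X :: "real \<Rightarrow> real^'n::finite^'n" and v :: "real \<Rightarrow> real^'n"
  assumes "\<And>a b. continuous_on S (\<lambda>t. X t $ a $ b)" "\<And>b. continuous_on S (\<lambda>t. v t $ b)"
  shows "continuous_on S (\<lambda>t. (X t *v v t) $ j)"
proof -
  have eq: "(\<lambda>t. (X t *v v t) $ j) = (\<lambda>t. \<Sum>k\<in>UNIV. X t $ j $ k * v t $ k)"
    by (simp add: matrix_vector_mult_def)
  show ?thesis unfolding eq by (intro continuous_on_sum continuous_on_mult assms)
qed

lemma cont_mm:
  fixes X Y :: "real \<Rightarrow> real^'n::finite^'n"
  assumes "\<And>a b. continuous_on S (\<lambda>t. X t $ a $ b)" "\<And>a b. continuous_on S (\<lambda>t. Y t $ a $ b)"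
  shows "continuous_on S (\<lambda>t. (X t ** Y t) $ a $ b)"
proof -
  have eq: "(\<lambda>t. (X t ** Y t) $ a $ b) = (\<lambda>t. \<Sum>k\<in>UNIV. X t $ a $ k * Y t $ k $ b)"
    by (simp add: matrix_matrix_mult_def)
  show ?thesis unfolding eq by (intro continuous_on_sum continuous_on_mult assms)
qed



lemma neg_mv: "(- A) *v x = - (A *v (x::real^'n::finite))"
  by (simp add: vec_eq_iff matrix_vector_mult_def sum_negf)

lemma mv_neg: "(A::real^'n::finite^'m::finite) *v (- x) = - (A *v x)"
  by (simp add: vec_eq_iff matrix_vector_mult_def sum_negf)

theorem mainTheorem4:
  fixes D :: "'n::finite \<Rightarrow> (real^'n) set"
    and f ft :: "real \<Rightarrow> 'n \<Rightarrow> real^'n \<Rightarrow> real"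
    and Qs :: "real^'n^'n"
  assumes D_sub: "\<And>i. D i \<subseteq> E_set i"
    and I_f: "cond_I D f"
    and C1: "\<And>i q t. q \<in> D i \<Longrightarrow> t \<ge> 0 \<Longrightarrow>
               ((\<lambda>s. f s i q) has_real_derivative ft t i q) (at t within {0..})"
    and C1_cont: "\<And>i q. q \<in> D i \<Longrightarrow> continuous_on {0..} (\<lambda>t. ft t i q)"
    and I_ft: "cond_I D ft"
    and R: "cond_R D f ft"
    and Qs: "Qs \<in> gens D"
    and strict: "\<And>i Q. Q \<in> gens D \<Longrightarrow> Q $ i \<noteq> Qs $ i \<Longrightarrow>
                   Gamma f Qs i (Qs $ i) > Gamma f Qs i (Q $ i)"
  shows "strong_equilibrium D f Qs"
proof -
  have isgen: "\<And>Q a. Q \<in> gens D \<Longrightarrow> Q $ a \<in> E_set a" using D_sub by (auto simp: gens_def)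
  have fcont: "continuous_on {0..} (\<lambda>t. f t j q)" if "q \<in> D j" for j q
    unfolding continuous_on_eq_continuous_within
    using DERIV_continuous[OF C1[OF that]] by auto
  have fint: "set_integrable lborel {0..} (\<lambda>t. f t j q)" if "q \<in> D j" for j q
    by (rule f_int[OF I_f fcont[OF that] that])
  have QsD: "Qs $ j \<in> D j" for j using Qs by (simp add: gens_def)
  have absb: "\<bar>mexp s A $ a $ b\<bar> \<le> 1" if "A \<in> gens D" "s \<in> {0..}" for A s a b
    using stoch[OF isgen[OF that(1)], of s a b] that(2) by auto
  show ?thesis unfolding strong_equilibrium_def
  proof (intro conjI allI ballI)
    show "Qs \<in> gens D" by (rule Qs)
    fix i Q assume Q: "Q \<in> gens D"
    have QD: "Q $ j \<in> D j" for j using Q by (simp add: gens_def)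
    define u where "u s m = (\<Sum>j\<in>UNIV. mexp s Qs $ m $ j * f s j (Qs$j))" for s m
    define fs where "fs s = (\<chi> j. f s j (Qs $ j))" for s
    define fQ where "fQ s = (\<chi> j. f s j (Q $ j))" for s
    define pv where "pv = payoff_vec f Qs"
    define V where "V t = (\<chi> m. pv $ m - integral {0..t} (\<lambda>s. u s m))" for t
    define g where "g t = (\<Sum>j\<in>UNIV. mexp t Q $ i $ j * f t j (Q$j))" for t
    define k where "k t = integral {0..t} g + (mexp t Q *v (mexp (-t) Qs *v V t)) $ i" for t
    define a where "a t = fQ t - fs t + (Q - Qs) *v (mexp (-t) Qs *v V t)" for t

    have u_int: "set_integrable lborel {0..} (\<lambda>s. u s m)" for m
      unfolding u_def
      by (rule set_integral_sum'(1)) (auto intro!: int_bounded_mult fint QsD mexp_cont absb Qs)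
    have g_int: "set_integrable lborel {0..} g"
      unfolding g_def
      by (rule set_integral_sum'(1)) (auto intro!: int_bounded_mult fint QD mexp_cont absb Q)
    have u_cont: "continuous_on {0..} (\<lambda>s. u s m)" for m
      unfolding u_def by (intro continuous_on_sum continuous_on_mult mexp_cont fcont QsD)
    have g_cont: "continuous_on {0..} g"
      unfolding g_def by (intro continuous_on_sum continuous_on_mult mexp_cont fcont QD)
    have pv_eq: "pv $ m = (LINT s:{0..}|lborel. u s m)" for m
      by (simp add: pv_def payoff_vec_def payoff_def u_def)

    have k0: "k 0 = payoff f i Qs"
      by (simp add: k_def V_def mexp_zero pv_def payoff_vec_def)
    have kpos: "payoff_cat f i Q e Qs = k e" if e: "0 < e" for e
    proof -
      define C where "C = mexp e Q ** mexp (- e) Qs"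
      define Fc where "Fc t = (\<Sum>j\<in>UNIV. cat_trans Q e Qs t $ i $ j * f t j (cat_gen Q e Qs t $ j))" for t
      have Fc1: "Fc t = g t" if "t \<in> {0..e}" for t
        using that by (simp add: Fc_def g_def cat_trans_def cat_gen_def)
      have Fc2: "Fc t = (\<Sum>m\<in>UNIV. C $ i $ m * u t m)" if "t \<in> {e<..}" for t
      proof -
        have "mexp (t - e) Qs = mexp (- e) Qs ** mexp t Qs"
          using mexp_add[of "-e" t Qs] by simp
        then have ct: "cat_trans Q e Qs t = C ** mexp t Qs"
          using that by (simp add: cat_trans_def C_def matrix_mul_assoc)
        have cg: "cat_gen Q e Qs t = Qs" using that by (simp add: cat_gen_def)
        have "Fc t = (\<Sum>j\<in>UNIV. (\<Sum>m\<in>UNIV. C $ i $ m * mexp t Qs $ m $ j) * f t j (Qs $ j))"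
          by (simp add: Fc_def ct cg matrix_matrix_mult_def)
        also have "\<dots> = (\<Sum>j\<in>UNIV. \<Sum>m\<in>UNIV. C $ i $ m * (mexp t Qs $ m $ j * f t j (Qs $ j)))"
          by (simp add: sum_distrib_right mult.assoc)
        also have "\<dots> = (\<Sum>m\<in>UNIV. \<Sum>j\<in>UNIV. C $ i $ m * (mexp t Qs $ m $ j * f t j (Qs $ j)))"
          by (rule sum.swap)
        also have "\<dots> = (\<Sum>m\<in>UNIV. C $ i $ m * u t m)"
          by (simp add: u_def sum_distrib_left)
        finally show ?thesis .
      qed
      have sub1: "{0..e} \<subseteq> {0::real..}" and sub2: "{e<..} \<subseteq> {0::real..}" using e by auto
      have gi: "set_integrable lborel {0..e} g"
        by (rule set_integrable_subset[OF g_int _ sub1]) simp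
      have ui1: "set_integrable lborel {0..e} (\<lambda>s. u s m)" for m
        by (rule set_integrable_subset[OF u_int _ sub1]) simp
      have ui2: "set_integrable lborel {e<..} (\<lambda>s. u s m)" for m
        by (rule set_integrable_subset[OF u_int _ sub2]) simp
      have ci2: "set_integrable lborel {e<..} (\<lambda>t. \<Sum>m\<in>UNIV. C $ i $ m * u t m)"
        by (rule set_integral_sum'(1)) (auto intro!: ui2)
      have Fi1: "set_integrable lborel {0..e} Fc"
        by (rule set_integrable_cong'[OF gi]) (simp add: Fc1)
      have Fi2: "set_integrable lborel {e<..} Fc"
        by (rule set_integrable_cong'[OF ci2]) (simp add: Fc2)
      have un: "{0::real..} = {0..e} \<union> {e<..}" using e by auto
      have dj: "{0..e} \<inter> {e<..} = ({}::real set)" by auto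
      have "payoff_cat f i Q e Qs = (LINT t:{0..}|lborel. Fc t)"
        by (simp add: payoff_cat_def Fc_def)
      also have "\<dots> = (LINT t:{0..e}|lborel. Fc t) + (LINT t:{e<..}|lborel. Fc t)"
        unfolding un by (rule set_integral_Un[OF dj Fi1 Fi2])
      also have "(LINT t:{0..e}|lborel. Fc t) = (LINT t:{0..e}|lborel. g t)"
        by (rule set_lebesgue_integral_cong) (auto simp: Fc1)
      also have "\<dots> = integral {0..e} g"
        by (rule set_borel_integral_eq_integral(2)[OF gi])
      also have "(LINT t:{e<..}|lborel. Fc t) = (LINT t:{e<..}|lborel. (\<Sum>m\<in>UNIV. C $ i $ m * u t m))"
        by (rule set_lebesgue_integral_cong) (auto simp: Fc2)
      also have "\<dots> = (\<Sum>m\<in>UNIV. C $ i $ m * (LINT t:{e<..}|lborel. u t m))"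
        by (subst set_integral_sum'(2)) (auto intro!: ui2)
      also have "\<dots> = (\<Sum>m\<in>UNIV. C $ i $ m * V e $ m)"
      proof (intro sum.cong refl arg_cong2[where f="(*)"])
        fix m
        have "pv $ m = (LINT t:{0..e}|lborel. u t m) + (LINT t:{e<..}|lborel. u t m)"
          unfolding pv_eq un by (rule set_integral_Un[OF dj ui1 ui2])
        moreover have "(LINT t:{0..e}|lborel. u t m) = integral {0..e} (\<lambda>s. u s m)"
          by (rule set_borel_integral_eq_integral(2)[OF ui1])
        ultimately show "(LINT t:{e<..}|lborel. u t m) = V e $ m"
          by (simp add: V_def)
      qed
      also have "\<dots> = (C *v V e) $ i" by (simp add: matrix_vector_mult_def)
      finally show ?thesis
        by (simp add: k_def C_def matrix_vector_mul_assoc)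
    qed
    have sub01: "{0..1} \<subseteq> {0::real..}" by auto
    have dV: "((\<lambda>t. V t $ m) has_real_derivative - u t m) (at t within {0..1})" if t: "t \<in> {0..1}" for t m
    proof -
      have "((\<lambda>t. pv $ m - integral {0..t} (\<lambda>s. u s m)) has_real_derivative (0 - u t m)) (at t within {0..1})"
        by (intro DERIV_diff DERIV_const integral_has_real_derivative continuous_on_subset[OF u_cont sub01] t)
      then show ?thesis by (simp add: V_def)
    qed
    have Vcont: "continuous_on {0..1} (\<lambda>t. V t $ m)" for m
      unfolding continuous_on_eq_continuous_within using DERIV_continuous[OF dV] by blast
    have kd: "(k has_real_derivative (mexp t Q *v a t) $ i) (at t within {0..1})" if t: "t \<in> {0..1}" for t
    proof -
      let ?P = "mexp t Q" and ?M = "mexp (- t) Qs" and ?R = "mexp t Qs"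
      define V' where "V' = (\<chi> m. - u t m)"
      have kk: "k = (\<lambda>t. integral {0..t} g + ((mexp t Q ** mexp (- t) Qs) *v V t) $ i)"
        by (simp add: k_def fun_eq_iff matrix_vector_mul_assoc)
      have d1: "((\<lambda>t. integral {0..t} g) has_real_derivative g t) (at t within {0..1})"
        by (intro integral_has_real_derivative continuous_on_subset[OF g_cont sub01] t)
      have d2: "((\<lambda>t. ((mexp t Q ** mexp (- t) Qs) *v V t) $ i) has_real_derivative
          ((Q ** ?P ** ?M + ?P ** (- (Qs ** ?M))) *v V t + (?P ** ?M) *v V') $ i) (at t within {0..1})"
        by (intro mvmult_deriv mmult_deriv mexp_deriv mexp_neg_deriv) (simp add: V'_def dV[OF t])
      have uR: "V' = - (?R *v fs t)"
        by (simp add: V'_def vec_eq_iff u_def fs_def matrix_vector_mult_def)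
      have "(Q ** ?P ** ?M + ?P ** (- (Qs ** ?M))) *v V t + (?P ** ?M) *v V'
          = ?P *v (Q *v (?M *v V t)) - ?P *v (Qs *v (?M *v V t)) - ?P *v fs t"
      proof -
        have "Q ** ?P = ?P ** Q" by (simp add: mexp_comm)
        then have A: "(Q ** ?P ** ?M) *v V t = ?P *v (Q *v (?M *v V t))"
          by (simp add: matrix_vector_mul_assoc matrix_mul_assoc)
        have B: "(?P ** (- (Qs ** ?M))) *v V t = - (?P *v (Qs *v (?M *v V t)))"
          by (simp add: matrix_neg_right neg_mv matrix_vector_mul_assoc)
        have "(?P ** ?M) *v V' = - ((?P ** (?M ** ?R)) *v fs t)"
          by (simp add: uR mv_neg matrix_vector_mul_assoc matrix_mul_assoc)
        also have "\<dots> = - (?P *v fs t)" by (simp add: mexp_inv)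
        finally have C: "(?P ** ?M) *v V' = - (?P *v fs t)" .
        show ?thesis by (simp add: matrix_vector_mult_add_rdistrib A B C)
      qed
      moreover have "g t = (?P *v fQ t) $ i"
        by (simp add: g_def fQ_def matrix_vector_mult_def)
      moreover have "?P *v a t = ?P *v fQ t - ?P *v fs t + (?P *v (Q *v (?M *v V t)) - ?P *v (Qs *v (?M *v V t)))"
        by (simp add: a_def matrix_vector_right_distrib matrix_vector_mult_diff_distrib matrix_vector_mult_diff_rdistrib)
      ultimately have "g t + ((Q ** ?P ** ?M + ?P ** (- (Qs ** ?M))) *v V t + (?P ** ?M) *v V') $ i = (?P *v a t) $ i"
        by simp
      with DERIV_add[OF d1 d2] show ?thesis unfolding kk by simp
    qed
    have kcont: "continuous_on {0..1} k"
      unfolding continuous_on_eq_continuous_within using DERIV_continuous[OF kd] by blast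
    have Wcont: "continuous_on {0..1} (\<lambda>t. (mexp (- t) Qs *v V t) $ m)" for m
      by (rule cont_mv) (auto intro: mexp_neg_cont Vcont)
    have acont: "continuous_on {0..1} (\<lambda>t. a t $ j)" for j
    proof -
      have "continuous_on {0..1} (\<lambda>t. ((\<lambda>_. Q - Qs) t *v (mexp (- t) Qs *v V t)) $ j)"
        by (rule cont_mv) (auto intro: Wcont)
      moreover have "continuous_on {0..1} (\<lambda>t. f t j (Q $ j))" "continuous_on {0..1} (\<lambda>t. f t j (Qs $ j))"
        by (auto intro: continuous_on_subset[OF fcont sub01] QD QsD)
      ultimately show ?thesis
        by (simp add: a_def fQ_def fs_def continuous_on_add continuous_on_diff)
    qed
    have a0: "a 0 $ j = Gamma f Qs j (Q $ j) - Gamma f Qs j (Qs $ j)" for j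
    proof -
      have V0: "V 0 = pv" by (simp add: V_def vec_eq_iff)
      have a0': "a 0 = fQ 0 - fs 0 + (Q - Qs) *v pv" by (simp add: a_def V0 mexp_zero)
      have "((Q - Qs) *v pv) $ j = Q $ j \<bullet> pv - Qs $ j \<bullet> pv"
        by (simp add: matrix_vector_mult_def inner_vec_def algebra_simps sum_subtractf)
      then show ?thesis
        by (simp add: a0' fQ_def fs_def Gamma_def pv_def)
    qed
    have ev: "eventually (\<lambda>t. a t $ j \<le> 0) (at_right 0)" for j
    proof (cases "Q $ j = Qs $ j")
      case True
      have "a t $ j = 0" for t
      proof -
        have "(Q - Qs) $ j = 0" using True by simp
        then have "((Q - Qs) *v w) $ j = 0" for w
          by (simp add: matrix_vector_mult_def vec_eq_iff)
        then show ?thesis using True by (simp add: a_def fQ_def fs_def)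
      qed
      then show ?thesis by simp
    next
      case False
      have neg: "a 0 $ j < 0" using strict[OF Q False] by (simp add: a0)
      have "((\<lambda>t. a t $ j) \<longlongrightarrow> a 0 $ j) (at 0 within {0..1})"
        using acont[of j] unfolding continuous_on_def by auto
      then have "((\<lambda>t. a t $ j) \<longlongrightarrow> a 0 $ j) (at_right 0)"
        by (simp add: at_within_Icc_at_right)
      from order_tendstoD(2)[OF this neg] show ?thesis by (rule eventually_mono) simp
    qed
    have "eventually (\<lambda>t. \<forall>j. a t $ j \<le> 0) (at_right 0)"
      by (rule eventually_all_finite) (rule ev)
    then obtain b where b: "b > 0" and bP: "\<And>y. 0 < y \<Longrightarrow> y < b \<Longrightarrow> \<forall>j. a y $ j \<le> 0"
      unfolding eventually_at_right_field by auto
    show "\<exists>\<epsilon>>0. \<forall>\<epsilon>'. 0 < \<epsilon>' \<and> \<epsilon>' \<le> \<epsilon> \<longrightarrow> payoff_cat f i Q \<epsilon>' Qs \<le> payoff f i Qs"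
    proof (intro exI[of _ "min (b/2) (1/2)"] conjI allI impI)
      show "0 < min (b/2) (1/2::real)" using b by simp
      fix e :: real assume e: "0 < e \<and> e \<le> min (b/2) (1/2)"
      have kd': "(k has_real_derivative (mexp x Q *v a x) $ i) (at x)" if "0 < x" "x < e" for x
      proof -
        have "(k has_real_derivative (mexp x Q *v a x) $ i) (at x within {0..1})"
          using that e by (intro kd) auto
        moreover have "at x within {0..1} = at x" using that e by (intro at_within_Icc_at) auto
        ultimately show ?thesis by simp
      qed
      have "continuous_on {0..e} k" by (rule continuous_on_subset[OF kcont]) (use e in auto)
      then obtain l z where z: "0 < z" "z < e" and dz: "DERIV k z :> l" and kl: "k e - k 0 = (e - 0) * l"
        using MVT[of 0 e k] e kd' real_differentiable_def by blast
      have "l = (mexp z Q *v a z) $ i" using DERIV_unique[OF dz kd'[OF z]] .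
      also have "\<dots> \<le> 0"
      proof -
        have "(mexp z Q *v a z) $ i = (\<Sum>j\<in>UNIV. mexp z Q $ i $ j * a z $ j)"
          by (simp add: matrix_vector_mult_def)
        also have "\<dots> \<le> 0"
        proof (rule sum_nonpos)
          fix j
          have "0 \<le> mexp z Q $ i $ j" using stoch[OF isgen[OF Q], of z] z by auto
          moreover have "a z $ j \<le> 0" using bP[of z] z e by auto
          ultimately show "mexp z Q $ i $ j * a z $ j \<le> 0" by (rule mult_nonneg_nonpos)
        qed
        finally show ?thesis .
      qed
      finally have "l \<le> 0" .
      then have "e * l \<le> 0" using e by (simp add: mult_nonneg_nonpos)
      then have "k e \<le> k 0" using kl by simp
      then show "payoff_cat f i Q e Qs \<le> payoff f i Qs"
        using kpos[of e] k0 e by simp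
    qed
  qed
qed

end
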